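(* For all integers $1\le s\le t<n$, $$\tilde{R}(\dot C_t^{(b)}\sqcup \dot C_s^{(r)},Q_n)=n+t+1.$$
   Context: $C_t$ is the chain on $t$ vertices; $\dot C_t^{(b)}$ is it colored entirely blue and $\dot C_s^{(r)}$ is $C_s$ colored entirely red. The parallel composition $\dot P_1\sqcup\dot P_2$ is the colored poset consisting of disjoint copies of $\dot P_1$ and $\dot P_2$ with every vertex of one incomparable to every vertex of the other. $Q_N$ is the Boolean lattice of all subsets of an $N$-element set ordered by inclusion. In a blue/red coloring of $Q_N$, a copy of a colored poset $\dot P$ is an induced subposet isomorphic to $P$ with matching colors. The poset Erdős–Hajnal number $\tilde{R}(\dot P,Q_n)$ is the minimum $N$ such that every blue/red coloring of $Q_N$ contains a copy of $\dot P$ or a monochromatic induced copy of $Q_n$. *)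

theory Defs
  imports Main
begin

text \<open>A colored poset is given by a carrier P, an order relation le on it, and a
coloring col (True = blue, False = red). The Boolean lattice Q_N is Pow {..<N}
ordered by inclusion; a blue/red coloring of Q_N is a map c :: nat set \<Rightarrow> bool
(True = blue), only its values on Pow {..<N} being relevant.\<close>

definition has_copy ::
  "'a set \<Rightarrow> ('a \<Rightarrow> 'a \<Rightarrow> bool) \<Rightarrow> ('a \<Rightarrow> bool) \<Rightarrow> nat \<Rightarrow> (nat set \<Rightarrow> bool) \<Rightarrow> bool" where
  "has_copy P le col N c \<longleftrightarrow>
     (\<exists>f. f ` P \<subseteq> Pow {..<N} \<and> inj_on f P \<and>
          (\<forall>x\<in>P. \<forall>y\<in>P. le x y \<longleftrightarrow> f x \<subseteq> f y) \<and>
          (\<forall>x\<in>P. c (f x) = col x))"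

definition has_mono_Q :: "nat \<Rightarrow> nat \<Rightarrow> (nat set \<Rightarrow> bool) \<Rightarrow> bool" where
  "has_mono_Q n N c \<longleftrightarrow> (\<exists>b. has_copy (Pow {..<n}) (\<subseteq>) (\<lambda>_. b) N c)"

definition poset_EH ::
  "'a set \<Rightarrow> ('a \<Rightarrow> 'a \<Rightarrow> bool) \<Rightarrow> ('a \<Rightarrow> bool) \<Rightarrow> nat \<Rightarrow> nat" where
  "poset_EH P le col n =
     (LEAST N. \<forall>c :: nat set \<Rightarrow> bool. has_copy P le col N c \<or> has_mono_Q n N c)"

definition chains_carrier :: "nat \<Rightarrow> nat \<Rightarrow> (nat + nat) set" where
  "chains_carrier t s = Inl ` {..<t} \<union> Inr ` {..<s}"

fun chains_le :: "nat + nat \<Rightarrow> nat + nat \<Rightarrow> bool" where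
  "chains_le (Inl i) (Inl j) = (i \<le> j)"
| "chains_le (Inr i) (Inr j) = (i \<le> j)"
| "chains_le _ _ = False"

fun chains_col :: "nat + nat \<Rightarrow> bool" where
  "chains_col (Inl _) = True"
| "chains_col (Inr _) = False"

end

theory Submission
  imports Defs
begin

definition Tch :: "nat \<Rightarrow> (nat set \<Rightarrow> bool) \<Rightarrow> bool \<Rightarrow> nat \<Rightarrow> nat set \<Rightarrow> bool" where
 "Tch a c b m X \<longleftrightarrow> (\<exists>g. (\<forall>i<m. a \<in> g i \<and> g i \<subseteq> X \<and> c (g i) = b) \<and> (\<forall>i. Suc i < m \<longrightarrow> g i \<subset> g (Suc i)))"

lemma Tch_mono: "Tch a c b m X \<Longrightarrow> X \<subseteq> Y \<Longrightarrow> Tch a c b m Y"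
proof -
  assume "Tch a c b m X" and XY: "X \<subseteq> Y"
  then obtain g where g: "\<forall>i<m. a \<in> g i \<and> g i \<subseteq> X \<and> c (g i) = b"
    "\<forall>i. Suc i < m \<longrightarrow> g i \<subset> g (Suc i)" unfolding Tch_def by blast
  have "\<forall>i<m. a \<in> g i \<and> g i \<subseteq> Y \<and> c (g i) = b" using g(1) XY by blast
  then show ?thesis unfolding Tch_def using g(2) by blast
qed

lemma chain_strict:
  assumes "\<forall>i. Suc i < m \<longrightarrow> g i \<subset> g (Suc i)"
  shows "i < j \<Longrightarrow> j < m \<Longrightarrow> g i \<subset> g j"
proof (induction j)
  case 0 then show ?case by simp
next
  case (Suc j)
  have s1: "g j \<subset> g (Suc j)" using assms Suc.prems(2) by blast
  show ?case
  proof (cases "i = j")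
    case True then show ?thesis using s1 by simp
  next
    case False
    then have "i < j" using Suc.prems(1) by simp
    then have "g i \<subset> g j" using Suc.IH Suc.prems(2) by simp
    then show ?thesis using s1 by (rule psubset_trans)
  qed
qed

lemma chain_card:
  assumes "\<forall>i. Suc i < m \<longrightarrow> g i \<subset> g (Suc i)" "\<forall>i<m. finite (g i)"
  shows "i < m \<Longrightarrow> card (g 0) + i \<le> card (g i)"
proof (induction i)
  case 0 then show ?case by simp
next
  case (Suc i)
  have "g i \<subset> g (Suc i)" using assms(1) Suc.prems by blast
  moreover have "finite (g (Suc i))" using assms(2) Suc.prems by blast
  ultimately have "card (g i) < card (g (Suc i))"
    by (rule psubset_card_mono[rotated])
  then show ?case using Suc by simp
qed

lemma copy_mono: "has_copy P le col N c \<Longrightarrow> N \<le> N' \<Longrightarrow> has_copy P le col N' c"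
proof -
  assume h: "has_copy P le col N c" and NN: "N \<le> N'"
  have "Pow {..<N} \<subseteq> Pow {..<N'}" using NN by auto
  moreover obtain f where "f ` P \<subseteq> Pow {..<N}" "inj_on f P"
    "\<forall>x\<in>P. \<forall>y\<in>P. le x y \<longleftrightarrow> f x \<subseteq> f y" "\<forall>x\<in>P. c (f x) = col x"
    using h unfolding has_copy_def by blast
  ultimately have "f ` P \<subseteq> Pow {..<N'}" "inj_on f P"
    "\<forall>x\<in>P. \<forall>y\<in>P. le x y \<longleftrightarrow> f x \<subseteq> f y" "\<forall>x\<in>P. c (f x) = col x"
    by blast+
  then show ?thesis unfolding has_copy_def by blast
qed

lemma lemA:
  assumes "n + k \<le> a" "a < N"
  shows "has_copy (Pow {..<n}) (\<subseteq>) (\<lambda>_. \<not> b) N c \<or>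
         (\<exists>g. (\<forall>i<Suc k. a \<in> g i \<and> g i \<subseteq> insert a {..<n+k} \<and> c (g i) = b)
            \<and> (\<forall>i. Suc i < Suc k \<longrightarrow> g i \<subset> g (Suc i)))"
proof (rule disjCI)
  assume nochain: "\<not> (\<exists>g. (\<forall>i<Suc k. a \<in> g i \<and> g i \<subseteq> insert a {..<n+k} \<and> c (g i) = b)
            \<and> (\<forall>i. Suc i < Suc k \<longrightarrow> g i \<subset> g (Suc i)))"
  have noT: "\<not> Tch a c b (Suc k) X" if "X \<subseteq> insert a {..<n+k}" for X
  proof
    assume "Tch a c b (Suc k) X"
    then obtain g where g: "\<forall>i<Suc k. a \<in> g i \<and> g i \<subseteq> X \<and> c (g i) = b"
      "\<forall>i. Suc i < Suc k \<longrightarrow> g i \<subset> g (Suc i)" unfolding Tch_def by blast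
    have "\<forall>i<Suc k. a \<in> g i \<and> g i \<subseteq> insert a {..<n+k} \<and> c (g i) = b"
      using g(1) that by blast
    then show False using nochain g(2) by blast
  qed
  define F where "F S j = insert a (S \<union> {n..<n+j})" for S j
  define J where "J S = (LEAST j. \<not> Tch a c b (Suc j) (F S j))" for S
  have Fk: "F S k \<subseteq> insert a {..<n+k}" if "S \<subseteq> {..<n}" for S
    using that unfolding F_def by auto
  have Jex: "\<not> Tch a c b (Suc (J S)) (F S (J S))" if "S \<subseteq> {..<n}" for S
    unfolding J_def by (rule LeastI[of _ k]) (use noT Fk that in blast)
  have Jle: "J S \<le> k" if "S \<subseteq> {..<n}" for S
    unfolding J_def by (rule Least_le) (use noT Fk that in blast)
  have Jmono: "J S \<le> J S'" if "S \<subseteq> S'" "S' \<subseteq> {..<n}" for S S'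
  proof -
    have "F S (J S') \<subseteq> F S' (J S')" using that unfolding F_def by auto
    then have "\<not> Tch a c b (Suc (J S')) (F S (J S'))"
      using Jex[OF that(2)] Tch_mono by blast
    then show ?thesis unfolding J_def[of S] by (rule Least_le)
  qed
  have col: "c (F S (J S)) \<noteq> b" if S: "S \<subseteq> {..<n}" for S
  proof
    assume cb: "c (F S (J S)) = b"
    show False
    proof (cases "J S")
      case 0
      have "Tch a c b (Suc 0) (F S 0)"
        unfolding Tch_def
        by (rule exI[of _ "\<lambda>_. F S 0"]) (use cb 0 in \<open>auto simp: F_def\<close>)
      then show False using Jex[OF S] 0 by simp
    next
      case (Suc j)
      have "Tch a c b (Suc j) (F S j)"
      proof (rule ccontr)
        assume "\<not> Tch a c b (Suc j) (F S j)"
        then have "J S \<le> j" unfolding J_def by (rule Least_le)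
        then show False using Suc by simp
      qed
      then obtain g where g: "\<forall>i<Suc j. a \<in> g i \<and> g i \<subseteq> F S j \<and> c (g i) = b"
        "\<forall>i. Suc i < Suc j \<longrightarrow> g i \<subset> g (Suc i)"
        unfolding Tch_def by blast
      have jk: "Suc j \<le> k" using Jle[OF S] Suc by simp
      have sub: "F S j \<subset> F S (Suc j)"
      proof -
        have "n + j \<in> F S (Suc j)" unfolding F_def by simp
        moreover have "n + j \<notin> F S j" unfolding F_def using S jk assms(1) by auto
        moreover have "F S j \<subseteq> F S (Suc j)" unfolding F_def by auto
        ultimately show ?thesis by blast
      qed
      define g' where "g' = g(Suc j := F S (Suc j))"
      have "Tch a c b (Suc (Suc j)) (F S (Suc j))"
        unfolding Tch_def
      proof (rule exI[of _ g'], rule conjI; intro allI impI)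
        fix i assume i: "i < Suc (Suc j)"
        show "a \<in> g' i \<and> g' i \<subseteq> F S (Suc j) \<and> c (g' i) = b"
        proof (cases "i = Suc j")
          case True then show ?thesis using cb Suc by (simp add: g'_def F_def)
        next
          case False
          then have i': "i < Suc j" using i by simp
          then have "g i \<subseteq> F S j" "a \<in> g i" "c (g i) = b" using g(1) by blast+
          then show ?thesis using False sub by (auto simp: g'_def)
        qed
      next
        fix i assume i: "Suc i < Suc (Suc j)"
        show "g' i \<subset> g' (Suc i)"
        proof (cases "Suc i = Suc j")
          case True
          have "g j \<subseteq> F S j" using g(1) by blast
          then have "g j \<subset> F S (Suc j)" using sub by blast
          then show ?thesis using True by (simp add: g'_def)
        next
          case False then show ?thesis using g(2) i by (auto simp: g'_def)
        qed
      qed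
      then show False using Jex[OF S] Suc by simp
    qed
  qed
  have inter: "F S j \<inter> {..<n} = S" if "S \<subseteq> {..<n}" "j \<le> k" for S j
    using that assms(1) unfolding F_def by auto
  have h1: "(\<lambda>S. F S (J S)) ` Pow {..<n} \<subseteq> Pow {..<N}"
  proof (rule image_subsetI)
    fix S assume S: "S \<in> Pow {..<n}"
    then have "J S \<le> k" using Jle by auto
    then show "F S (J S) \<in> Pow {..<N}" using assms S unfolding F_def by auto
  qed
  have h2: "inj_on (\<lambda>S. F S (J S)) (Pow {..<n})"
  proof (rule inj_onI)
    fix x y assume x: "x \<in> Pow {..<n}" and y: "y \<in> Pow {..<n}"
      and e: "F x (J x) = F y (J y)"
    have "x = F x (J x) \<inter> {..<n}" using inter[of x "J x"] Jle[of x] x by auto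
    also have "\<dots> = F y (J y) \<inter> {..<n}" using e by simp
    also have "\<dots> = y" using inter[of y "J y"] Jle[of y] y by auto
    finally show "x = y" .
  qed
  have h3: "x \<subseteq> y \<longleftrightarrow> F x (J x) \<subseteq> F y (J y)" if x: "x \<in> Pow {..<n}" and y: "y \<in> Pow {..<n}" for x y
  proof
    assume "x \<subseteq> y"
    then have "J x \<le> J y" using Jmono y by auto
    then show "F x (J x) \<subseteq> F y (J y)" using \<open>x \<subseteq> y\<close> unfolding F_def by auto
  next
    assume "F x (J x) \<subseteq> F y (J y)"
    then have "F x (J x) \<inter> {..<n} \<subseteq> F y (J y) \<inter> {..<n}" by blast
    moreover have "F x (J x) \<inter> {..<n} = x" using inter[of x "J x"] Jle[of x] x by auto
    moreover have "F y (J y) \<inter> {..<n} = y" using inter[of y "J y"] Jle[of y] y by auto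
    ultimately show "x \<subseteq> y" by simp
  qed
  have h4: "c (F x (J x)) = (\<not> b)" if x: "x \<in> Pow {..<n}" for x
    using col x by auto
  show "has_copy (Pow {..<n}) (\<subseteq>) (\<lambda>_. \<not> b) N c"
    unfolding has_copy_def
    apply (rule exI[of _ "\<lambda>S. F S (J S)"])
    using h1 h2 h3 h4 by simp
qed

lemma chain_iff:
  assumes "\<forall>i. Suc i < m \<longrightarrow> g i \<subset> g (Suc i)" "i < m" "j < m"
  shows "i \<le> j \<longleftrightarrow> g i \<subseteq> g j"
proof
  assume "i \<le> j"
  then show "g i \<subseteq> g j"
    using chain_strict[OF assms(1), of i j] assms(3) by (cases "i = j") auto
next
  assume "g i \<subseteq> g j"
  then show "i \<le> j"
    using chain_strict[OF assms(1), of j i] assms(2) by (cases "j < i") auto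
qed

lemma chains_le_antisym: "chains_le x y \<Longrightarrow> chains_le y x \<Longrightarrow> x = y"
  by (cases x; cases y) auto

lemma no_copy_low:
  assumes "1 \<le> s" "s \<le> t" "t < n"
  shows "\<not> has_copy (chains_carrier t s) chains_le chains_col (n+t)
            (\<lambda>X. card X < t \<or> n + t \<le> card X)"
proof
  let ?c = "\<lambda>X::nat set. card X < t \<or> n + t \<le> card X"
  assume "has_copy (chains_carrier t s) chains_le chains_col (n+t) ?c"
  then obtain f where f: "f ` chains_carrier t s \<subseteq> Pow {..<n+t}" "inj_on f (chains_carrier t s)"
    "\<forall>x\<in>chains_carrier t s. \<forall>y\<in>chains_carrier t s. chains_le x y \<longleftrightarrow> f x \<subseteq> f y"
    "\<forall>x\<in>chains_carrier t s. ?c (f x) = chains_col x"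
    unfolding has_copy_def by blast
  have r0: "Inr 0 \<in> chains_carrier t s" using assms unfolding chains_carrier_def by auto
  have li: "Inl i \<in> chains_carrier t s" if "i < t" for i
    using that unfolding chains_carrier_def by auto
  define x where "x = f (Inr 0)"
  define y where "y i = f (Inl i)" for i
  have ysub: "y i \<subseteq> {..<n+t}" if "i < t" for i using f(1) li[OF that] unfolding y_def by blast
  have xsub: "x \<subseteq> {..<n+t}" using f(1) r0 unfolding x_def by blast
  have inc1: "\<not> y i \<subseteq> x" if "i < t" for i
  proof -
    have "\<not> chains_le (Inl i) (Inr 0)" by simp
    then show ?thesis using f(3) li[OF that] r0 unfolding x_def y_def by blast
  qed
  have inc2: "\<not> x \<subseteq> y i" if "i < t" for i
  proof -
    have "\<not> chains_le (Inr 0) (Inl i)" by simp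
    then show ?thesis using f(3) li[OF that] r0 unfolding x_def y_def by blast
  qed
  have ycol: "?c (y i)" if "i < t" for i
  proof -
    have "?c (f (Inl i)) = chains_col (Inl i)" using f(4) li[OF that] by blast
    then show ?thesis unfolding y_def by simp
  qed
  have fin: "finite (y i)" if "i < t" for i using ysub[OF that] finite_subset by blast
  have ysmall: "card (y i) < t" if "i < t" for i
  proof (rule ccontr)
    assume "\<not> card (y i) < t"
    then have "n + t \<le> card (y i)" using ycol[OF that] by blast
    then have "card {..<n+t} \<le> card (y i)" by simp
    then have "y i = {..<n+t}"
      using ysub[OF that] card_seteq[of "{..<n+t}" "y i"] by simp
    then show False using inc2[OF that] xsub by simp
  qed
  have chain: "\<forall>i. Suc i < t \<longrightarrow> y i \<subset> y (Suc i)"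
  proof (intro allI impI)
    fix i assume i: "Suc i < t"
    have "chains_le (Inl i) (Inl (Suc i))" by simp
    moreover have a1: "Inl i \<in> chains_carrier t s" and a2: "Inl (Suc i) \<in> chains_carrier t s"
      using li i by simp_all
    ultimately have "y i \<subseteq> y (Suc i)" using bspec[OF bspec[OF f(3) a1] a2] unfolding y_def by simp
    moreover have "y i \<noteq> y (Suc i)"
    proof
      assume "y i = y (Suc i)"
      then have "f (Inl i) = f (Inl (Suc i))" unfolding y_def .
      moreover have "Inl i \<in> chains_carrier t s" "Inl (Suc i) \<in> chains_carrier t s"
        using li i by simp_all
      ultimately have "Inl i = (Inl (Suc i) :: nat + nat)"
        using inj_onD[OF f(2)] by blast
      then show False by simp
    qed
    ultimately show "y i \<subset> y (Suc i)" by blast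
  qed
  have t0: "0 < t" using assms by simp
  have "y 0 \<noteq> {}" using inc1[OF t0] by auto
  then have "1 \<le> card (y 0)" using fin[OF t0] by (simp add: Suc_leI card_gt_0_iff)
  moreover have "card (y 0) + (t - 1) \<le> card (y (t - 1))"
    using chain_card[of t y "t - 1"] chain fin t0 by simp
  moreover have "card (y (t - 1)) < t" using ysmall t0 by simp
  ultimately show False by simp
qed

lemma no_mono_low:
  assumes "t < n"
  shows "\<not> has_mono_Q n (n+t) (\<lambda>X. card X < t \<or> n + t \<le> card X)"
proof
  let ?c = "\<lambda>X::nat set. card X < t \<or> n + t \<le> card X"
  assume "has_mono_Q n (n+t) ?c"
  then obtain b where "has_copy (Pow {..<n}) (\<subseteq>) (\<lambda>_. b) (n+t) ?c"
    unfolding has_mono_Q_def by blast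
  then obtain f where f: "f ` Pow {..<n} \<subseteq> Pow {..<n+t}" "inj_on f (Pow {..<n})"
    "\<forall>x\<in>Pow {..<n}. \<forall>y\<in>Pow {..<n}. x \<subseteq> y \<longleftrightarrow> f x \<subseteq> f y"
    "\<forall>x\<in>Pow {..<n}. ?c (f x) = b"
    unfolding has_copy_def by blast
  define z where "z i = f {..<i}" for i
  have inP: "{..<i} \<in> Pow {..<n}" if "i \<le> n" for i using that by auto
  have zsub: "z i \<subseteq> {..<n+t}" if "i \<le> n" for i using f(1) inP[OF that] unfolding z_def by blast
  have fin: "finite (z i)" if "i \<le> n" for i using zsub[OF that] finite_subset by blast
  have zle: "card (z i) \<le> n + t" if "i \<le> n" for i
    using card_mono[OF _ zsub[OF that]] by simp
  have zcol: "?c (z i) = b" if "i \<le> n" for i using f(4) inP[OF that] unfolding z_def by blast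
  have chain: "\<forall>i. Suc i < Suc n \<longrightarrow> z i \<subset> z (Suc i)"
  proof (intro allI impI)
    fix i assume i: "Suc i < Suc n"
    have i1: "{..<i} \<in> Pow {..<n}" "{..<Suc i} \<in> Pow {..<n}" using inP i by simp_all
    have "{..<i} \<subseteq> {..<Suc i}" by auto
    then have "z i \<subseteq> z (Suc i)" using f(3) i1 unfolding z_def by blast
    moreover have "{..<i} \<noteq> {..<Suc i}" by auto
    then have "z i \<noteq> z (Suc i)"
      using inj_onD[OF f(2) _ i1] unfolding z_def by blast
    ultimately show "z i \<subset> z (Suc i)" by blast
  qed
  have cc: "card (z 0) + i \<le> card (z i)" if "i \<le> n" for i
    using chain_card[of "Suc n" z i] chain fin that by simp
  show False
  proof (cases b)
    case True
    have "t \<le> card (z t)" using cc[of t] assms by simp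
    then have "n + t \<le> card (z t)" using zcol[of t] True assms by auto
    moreover have "card (z t) < card (z (Suc t))"
    proof -
      have "z t \<subset> z (Suc t)" using chain assms by simp
      moreover have "finite (z (Suc t))" using fin assms by simp
      ultimately show ?thesis by (rule psubset_card_mono[rotated])
    qed
    moreover have "card (z (Suc t)) \<le> n + t" using zle[of "Suc t"] assms by simp
    ultimately show False by simp
  next
    case False
    have "t \<le> card (z 0)" using zcol[of 0] False by auto
    then have "n + t \<le> card (z n)" using cc[of n] by simp
    then show False using zcol[of n] False by auto
  qed
qed

lemma upper:
  assumes "1 \<le> s" "s \<le> t" "t < n"
  shows "has_copy (chains_carrier t s) chains_le chains_col (n+t+1) c \<or> has_mono_Q n (n+t+1) c"
proof (rule disjCI)
  assume nm: "\<not> has_mono_Q n (n+t+1) c"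
  have tt: "Suc (t - 1) = t" "n + (t - 1) = n + t - 1" using assms by auto
  have nc1: "\<not> has_copy (Pow {..<n}) (\<subseteq>) (\<lambda>_. \<not> True) (n+t+1) c"
    using nm unfolding has_mono_Q_def by blast
  have nc2: "\<not> has_copy (Pow {..<n}) (\<subseteq>) (\<lambda>_. \<not> False) (n+t+1) c"
    using nm unfolding has_mono_Q_def by blast
  have L1: "has_copy (Pow {..<n}) (\<subseteq>) (\<lambda>_. \<not> True) (n+t+1) c \<or>
         (\<exists>g. (\<forall>i<Suc (t-1). n+t \<in> g i \<and> g i \<subseteq> insert (n+t) {..<n+(t-1)} \<and> c (g i) = True)
            \<and> (\<forall>i. Suc i < Suc (t-1) \<longrightarrow> g i \<subset> g (Suc i)))"
    by (rule lemA) (use assms in auto)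
  have L2: "has_copy (Pow {..<n}) (\<subseteq>) (\<lambda>_. \<not> False) (n+t+1) c \<or>
         (\<exists>g. (\<forall>i<Suc (t-1). n+t-1 \<in> g i \<and> g i \<subseteq> insert (n+t-1) {..<n+(t-1)} \<and> c (g i) = False)
            \<and> (\<forall>i. Suc i < Suc (t-1) \<longrightarrow> g i \<subset> g (Suc i)))"
    by (rule lemA) (use assms in auto)
  obtain g where g0: "\<forall>i<Suc (t-1). n+t \<in> g i \<and> g i \<subseteq> insert (n+t) {..<n+(t-1)} \<and> c (g i) = True"
    "\<forall>i. Suc i < Suc (t-1) \<longrightarrow> g i \<subset> g (Suc i)"
    using L1 nc1 by blast
  obtain h where h0: "\<forall>i<Suc (t-1). n+t-1 \<in> h i \<and> h i \<subseteq> insert (n+t-1) {..<n+(t-1)} \<and> c (h i) = False"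
    "\<forall>i. Suc i < Suc (t-1) \<longrightarrow> h i \<subset> h (Suc i)"
    using L2 nc2 by blast
  have g: "\<forall>i<t. n+t \<in> g i \<and> g i \<subseteq> insert (n+t) {..<n+t-1} \<and> c (g i) = True"
    "\<forall>i. Suc i < t \<longrightarrow> g i \<subset> g (Suc i)"
    using g0 unfolding tt .
  have h: "\<forall>i<t. n+t-1 \<in> h i \<and> h i \<subseteq> insert (n+t-1) {..<n+t-1} \<and> c (h i) = False"
    "\<forall>i. Suc i < t \<longrightarrow> h i \<subset> h (Suc i)"
    using h0 unfolding tt .
  have giff: "i \<le> j \<longleftrightarrow> g i \<subseteq> g j" if "i < t" "j < t" for i j
    using chain_iff[OF g(2) that] .
  have hiff: "i \<le> j \<longleftrightarrow> h i \<subseteq> h j" if "i < s" "j < s" for i j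
  proof -
    have "i < t" "j < t" using that assms by auto
    then show ?thesis using chain_iff[OF h(2)] by blast
  qed
  have inc: "\<not> g i \<subseteq> h j \<and> \<not> h j \<subseteq> g i" if "i < t" "j < s" for i j
  proof -
    have jt: "j < t" using that assms by simp
    have gi: "n + t \<in> g i" "g i \<subseteq> insert (n+t) {..<n+t-1}" using g(1) that(1) by blast+
    have hj: "n + t - 1 \<in> h j" "h j \<subseteq> insert (n+t-1) {..<n+t-1}" using h(1) jt by blast+
    have "n + t \<notin> h j" using hj(2) assms by auto
    moreover have "n + t - 1 \<notin> g i" using gi(2) assms by auto
    ultimately show ?thesis using gi(1) hj(1) by blast
  qed
  define f where "f = case_sum g h"
  have key: "chains_le x y \<longleftrightarrow> f x \<subseteq> f y"
    if x: "x \<in> chains_carrier t s" and y: "y \<in> chains_carrier t s" for x y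
  proof -
    consider (ll) i j where "x = Inl i" "y = Inl j" "i < t" "j < t"
      | (lr) i j where "x = Inl i" "y = Inr j" "i < t" "j < s"
      | (rl) i j where "x = Inr i" "y = Inl j" "i < s" "j < t"
      | (rr) i j where "x = Inr i" "y = Inr j" "i < s" "j < s"
      using x y unfolding chains_carrier_def by blast
    then show ?thesis
    proof cases
      case ll then show ?thesis using giff[of i j] by (simp add: f_def)
    next
      case lr then show ?thesis using inc[of i j] by (simp add: f_def)
    next
      case rl then show ?thesis using inc[of j i] by (simp add: f_def)
    next
      case rr then show ?thesis using hiff[of i j] by (simp add: f_def)
    qed
  qed
  have h1: "f ` chains_carrier t s \<subseteq> Pow {..<n+t+1}"
  proof (rule image_subsetI)
    fix x assume x: "x \<in> chains_carrier t s"
    show "f x \<in> Pow {..<n+t+1}"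
    proof (cases x)
      case (Inl i)
      then have "i < t" using x unfolding chains_carrier_def by auto
      then have "g i \<subseteq> insert (n+t) {..<n+t-1}" using g(1) by blast
      then show ?thesis using Inl by (auto simp: f_def)
    next
      case (Inr i)
      then have "i < t" using x assms unfolding chains_carrier_def by auto
      then have "h i \<subseteq> insert (n+t-1) {..<n+t-1}" using h(1) by blast
      then show ?thesis using Inr by (auto simp: f_def)
    qed
  qed
  have h2: "inj_on f (chains_carrier t s)"
  proof (rule inj_onI)
    fix x y assume x: "x \<in> chains_carrier t s" and y: "y \<in> chains_carrier t s" and e: "f x = f y"
    have "chains_le x y" using key[OF x y] e by simp
    moreover have "chains_le y x" using key[OF y x] e by simp
    ultimately show "x = y" by (rule chains_le_antisym)
  qed
  have h4: "c (f x) = chains_col x" if x: "x \<in> chains_carrier t s" for x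
  proof (cases x)
    case (Inl i)
    then have "i < t" using x unfolding chains_carrier_def by auto
    then have "c (g i) = True" using g(1) by blast
    then show ?thesis using Inl by (simp add: f_def)
  next
    case (Inr i)
    then have "i < t" using x assms unfolding chains_carrier_def by auto
    then have "c (h i) = False" using h(1) by blast
    then show ?thesis using Inr by (simp add: f_def)
  qed
  show "has_copy (chains_carrier t s) chains_le chains_col (n+t+1) c"
    unfolding has_copy_def
    apply (rule exI[of _ f])
    using h1 h2 key h4 by simp
qed

theorem lemma11:
  fixes s t n :: nat
  assumes "1 \<le> s" and "s \<le> t" and "t < n"
  shows "poset_EH (chains_carrier t s) chains_le chains_col n = n + t + 1"
  unfolding poset_EH_def
proof (rule Least_equality)
  show "\<forall>c. has_copy (chains_carrier t s) chains_le chains_col (n+t+1) c \<or> has_mono_Q n (n+t+1) c"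
    using upper assms by blast
next
  fix N assume H: "\<forall>c :: nat set \<Rightarrow> bool. has_copy (chains_carrier t s) chains_le chains_col N c \<or> has_mono_Q n N c"
  show "n + t + 1 \<le> N"
  proof (rule ccontr)
    assume "\<not> n + t + 1 \<le> N"
    then have NN: "N \<le> n + t" by simp
    let ?c = "\<lambda>X::nat set. card X < t \<or> n + t \<le> card X"
    have "has_copy (chains_carrier t s) chains_le chains_col N ?c \<or> has_mono_Q n N ?c" using H by blast
    then show False
    proof
      assume "has_copy (chains_carrier t s) chains_le chains_col N ?c"
      then show False using copy_mono[OF _ NN] no_copy_low[OF assms] by blast
    next
      assume "has_mono_Q n N ?c"
      then show False using copy_mono[OF _ NN] no_mono_low[OF assms(3)]
        unfolding has_mono_Q_def by blast
    qed
  qed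
qed

end
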